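(* Let $\mathcal{P}$ be a uniformly induced Lubell-bounded poset other than $\mathcal{C}_1$. Then $\mathrm{RR}(\vee_2:\mathcal{P})=2e(\mathcal{P})+1$.
   Context: $\mathcal{B}_n$ denotes the Boolean lattice of all subsets of $[n]$ ordered by inclusion; its $k$-th level is $\binom{[n]}{k}$, the family of $k$-element subsets. An induced copy of a poset $\mathcal{P}$ in a poset $\mathcal{Q}$ is the image of an injection $f:\mathcal{P}\to\mathcal{Q}$ with $f(X)\le f(Y)$ iff $X\le Y$; a family is induced $\mathcal{P}$-free if it contains no induced copy of $\mathcal{P}$. $\mathcal{C}_1$ is the one-element poset. $\vee_2$ is the poset on $X_0,X_1,X_2$ with $X_0<X_1$, $X_0<X_2$, $X_1,X_2$ incomparable. $e(\mathcal{P})$ is the largest integer $m$ such that for every $n$, the union of any $m$ consecutive levels of $\mathcal{B}_n$ is induced $\mathcal{P}$-free. For $\mathcal{F}\subseteq\mathcal{B}_n$, $\mathrm{lu}_n(\mathcal{F})=\sum_{F\in\mathcal{F}}\binom{n}{|F|}^{-1}$, and $\mathrm{Lu}_n(\mathcal{P})$ is the maximum of $\mathrm{lu}_n(\mathcal{F})$ over induced $\mathcal{P}$-free $\mathcal{F}\subseteq\mathcal{B}_n$. $\mathcal{P}$ is uniformly induced Lubell-bounded if $e(\mathcal{P})\ge \mathrm{Lu}_n(\mathcal{P})$ for all positive integers $n$. Monochromatic: all sets share a color; rainbow: pairwise distinct colors. $\mathrm{RR}(\mathcal{Q}:\mathcal{P})$ is the smallest $n$ such that every coloring (with any number of colors)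 of the sets of $\mathcal{B}_n$ contains a rainbow induced copy of $\mathcal{Q}$ or a monochromatic induced copy of $\mathcal{P}$. *)

theory Defs
  imports Complex_Main
begin

definition induced_emb :: "'a set \<Rightarrow> ('a \<Rightarrow> 'a \<Rightarrow> bool) \<Rightarrow> nat set set \<Rightarrow> ('a \<Rightarrow> nat set) \<Rightarrow> bool" where
  "induced_emb A le F f \<longleftrightarrow> inj_on f A \<and> f ` A \<subseteq> F \<and>
     (\<forall>x\<in>A. \<forall>y\<in>A. (f x \<subseteq> f y \<longleftrightarrow> le x y))"

definition induced_free :: "'a set \<Rightarrow> ('a \<Rightarrow> 'a \<Rightarrow> bool) \<Rightarrow> nat set set \<Rightarrow> bool" where
  "induced_free A le F \<longleftrightarrow> \<not> (\<exists>f. induced_emb A le F f)"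

definition boolean_lattice :: "nat \<Rightarrow> nat set set" where
  "boolean_lattice n = Pow {1..n}"

definition consec_levels :: "nat \<Rightarrow> nat \<Rightarrow> nat \<Rightarrow> nat set set" where
  "consec_levels n k m = {S. S \<subseteq> {1..n} \<and> k \<le> card S \<and> card S < k + m}"

definition e_num :: "'a set \<Rightarrow> ('a \<Rightarrow> 'a \<Rightarrow> bool) \<Rightarrow> nat" where
  "e_num A le = (GREATEST m. \<forall>n k. induced_free A le (consec_levels n k m))"

definition lubell :: "nat \<Rightarrow> nat set set \<Rightarrow> real" where
  "lubell n F = (\<Sum>S\<in>F. 1 / real (n choose card S))"

definition Lubell_max :: "nat \<Rightarrow> 'a set \<Rightarrow> ('a \<Rightarrow> 'a \<Rightarrow> bool) \<Rightarrow> real" where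
  "Lubell_max n A le = Max {lubell n F | F. F \<subseteq> boolean_lattice n \<and> induced_free A le F}"

definition uniformly_induced_Lubell_bounded :: "'a set \<Rightarrow> ('a \<Rightarrow> 'a \<Rightarrow> bool) \<Rightarrow> bool" where
  "uniformly_induced_Lubell_bounded A le \<longleftrightarrow> (\<forall>n>0. real (e_num A le) \<ge> Lubell_max n A le)"

definition V2_carrier :: "nat set" where "V2_carrier = {0, 1, 2}"
definition V2_le :: "nat \<Rightarrow> nat \<Rightarrow> bool" where "V2_le x y \<longleftrightarrow> x = y \<or> x = 0"

text \<open>Rainbow-Ramsey number RR(Q:P); colourings use colours in nat, which
  covers any number of colours since B_n is finite.\<close>
definition RR :: "'b set \<Rightarrow> ('b \<Rightarrow> 'b \<Rightarrow> bool) \<Rightarrow> 'a set \<Rightarrow> ('a \<Rightarrow> 'a \<Rightarrow> bool) \<Rightarrow> nat" where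
  "RR Q leQ P leP = (LEAST n. \<forall>c :: nat set \<Rightarrow> nat.
      (\<exists>f. induced_emb Q leQ (boolean_lattice n) f \<and> inj_on c (f ` Q)) \<or>
      (\<exists>f col. induced_emb P leP (boolean_lattice n) f \<and> (\<forall>x\<in>P. c (f x) = col)))"

end

theory Submission
  imports Defs
begin

lemma choose_identity:
  assumes "s \<le> n"
  shows "(\<Sum>k\<le>s. real (s choose k) / real (n choose k)) = real (n+1) / real (n+1-s)"
proof -
  have pos: "real (n choose s) > 0" using assms by simp
  have eq1: "real (s choose k) / real (n choose k) = real ((n-k) choose (s-k)) / real (n choose s)"
    if "k \<le> s" for k
  proof -
    have "(n choose s) * (s choose k) = (n choose k) * ((n - k) choose (s - k))"
      using choose_mult[of k s n] that assms by simp
    hence "real (n choose s) * real (s choose k) = real (n choose k) * real ((n - k) choose (s - k))"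
      by (metis of_nat_mult)
    moreover have "real (n choose k) > 0" using that assms by simp
    ultimately show ?thesis using pos by (simp add: field_simps)
  qed
  have "(\<Sum>k\<le>s. real (s choose k) / real (n choose k)) = (\<Sum>k\<le>s. real ((n-k) choose (s-k)) / real (n choose s))"
    by (rule sum.cong) (auto simp: eq1)
  also have "\<dots> = real (\<Sum>k\<le>s. (n-k) choose (s-k)) / real (n choose s)"
    by (simp add: sum_divide_distrib)
  also have "\<dots> = real (Suc n choose s) / real (n choose s)"
    using sum_choose_diagonal[OF assms] by simp
  also have "\<dots> = real (n+1) / real (n+1-s)"
  proof -
    have "(Suc n - s) * (Suc n choose s) = Suc n * (n choose s)"
      using binomial_absorb_comp[of "Suc n" s] by simp
    hence "real (Suc n - s) * real (Suc n choose s) = real (Suc n) * real (n choose s)"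
      by (metis of_nat_mult)
    moreover have "real (Suc n - s) > 0" using assms by simp
    ultimately show ?thesis using pos by (simp add: field_simps)
  qed
  finally show ?thesis .
qed

lemma lubell_group:
  assumes "finite F" "finite T" "card ` F \<subseteq> T"
  shows "lubell n F = (\<Sum>k\<in>T. real (card {X\<in>F. card X = k}) / real (n choose k))"
proof -
  have "lubell n F = (\<Sum>k\<in>T. \<Sum>X\<in>{X\<in>F. card X = k}. 1 / real (n choose card X))"
    unfolding lubell_def using sum.group[OF assms, of "\<lambda>X. 1 / real (n choose card X)"] by simp
  also have "\<dots> = (\<Sum>k\<in>T. real (card {X\<in>F. card X = k}) / real (n choose k))"
    by (rule sum.cong) auto
  finally show ?thesis .
qed

lemma lubell_nonneg: "lubell n F \<ge> 0"
  unfolding lubell_def by (rule sum_nonneg) auto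

lemma lubell_mono: assumes "F \<subseteq> G" "finite G" shows "lubell n F \<le> lubell n G"
  unfolding lubell_def by (rule sum_mono2) (use assms in auto)

lemma lubell_union: assumes "finite A" "finite B" shows "lubell n (A \<union> B) \<le> lubell n A + lubell n B"
proof -
  have "lubell n (A \<union> B) = lubell n A + lubell n B - lubell n (A \<inter> B)"
    unfolding lubell_def using sum_Un[OF assms] by simp
  thus ?thesis using lubell_nonneg[of n "A \<inter> B"] by simp
qed

lemma lubell_levels:
  "lubell n {X. X \<subseteq> {1..n} \<and> card X < n} = real n"
proof -
  let ?F = "{X. X \<subseteq> {1..n} \<and> card X < n}"
  have fin: "finite ?F" by (rule finite_subset[of _ "Pow {1..n}"]) auto
  have "lubell n ?F = (\<Sum>k\<in>{..<n}. real (card {X\<in>?F. card X = k}) / real (n choose k))"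
    by (rule lubell_group) (use fin in auto)
  also have "\<dots> = (\<Sum>k\<in>{..<n}. 1)"
  proof (rule sum.cong)
    fix k assume k: "k \<in> {..<n}"
    have "{X\<in>?F. card X = k} = {X. X \<subseteq> {1..n} \<and> card X = k}" using k by auto
    hence "card {X\<in>?F. card X = k} = n choose k" using n_subsets[of "{1..n}" k] by simp
    moreover have "n choose k > 0" using k by simp
    ultimately show "real (card {X\<in>?F. card X = k}) / real (n choose k) = 1" by simp
  qed simp
  finally show ?thesis by simp
qed

lemma lubell_down:
  assumes "finite S" "card S \<le> n"
  shows "lubell n {X. X \<subseteq> S \<and> X \<noteq> {}} = real (card S) / real (n + 1 - card S)"
proof -
  let ?F = "{X. X \<subseteq> S \<and> X \<noteq> {}}"
  let ?s = "card S"
  have fin: "finite ?F" by (rule finite_subset[of _ "Pow S"]) (use assms in auto)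
  have "lubell n ?F = (\<Sum>k\<le>?s. real (card {X\<in>?F. card X = k}) / real (n choose k))"
    by (rule lubell_group) (use fin assms in \<open>auto intro: card_mono\<close>)
  also have "\<dots> = (\<Sum>k\<le>?s. real (?s choose k) / real (n choose k)) - 1"
  proof -
    have "(\<Sum>k\<le>?s. real (card {X\<in>?F. card X = k}) / real (n choose k))
        = (\<Sum>k\<le>?s. (if k = 0 then 1 else 0) + real (card {X\<in>?F. card X = k}) / real (n choose k)) - 1"
      by (simp add: sum.distrib)
    also have "(\<Sum>k\<le>?s. (if k = 0 then 1 else 0) + real (card {X\<in>?F. card X = k}) / real (n choose k))
        = (\<Sum>k\<le>?s. real (?s choose k) / real (n choose k))"
    proof (rule sum.cong)
      fix k assume "k \<in> {..?s}"
      show "(if k = 0 then 1 else 0) + real (card {X\<in>?F. card X = k}) / real (n choose k)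
          = real (?s choose k) / real (n choose k)"
      proof (cases "k = 0")
        case True
        have E: "{X\<in>?F. card X = k} = {}"
        proof -
          { fix X assume "X \<subseteq> S" "X \<noteq> {}" "card X = 0"
            hence False using assms(1) by (metis card_0_eq finite_subset) }
          thus ?thesis using True by auto
        qed
        show ?thesis by (subst E) (simp add: True)
      next
        case False
        have "{X\<in>?F. card X = k} = {X. X \<subseteq> S \<and> card X = k}" using False by auto
        thus ?thesis using False n_subsets[OF assms(1), of k] by simp
      qed
    qed simp
    finally show ?thesis .
  qed
  also have "\<dots> = real (n+1) / real (n+1-?s) - 1" using choose_identity[OF assms(2)] by simp
  also have "\<dots> = real ?s / real (n + 1 - ?s)"
  proof -
    have "real (n+1-?s) > 0" using assms by simp
    moreover have "real (n+1-?s) = real n + 1 - real ?s" using assms by simp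
    ultimately show ?thesis by (simp add: field_simps)
  qed
  finally show ?thesis .
qed


lemma lubell_up:
  assumes "S \<subseteq> {1..n}"
  shows "lubell n {X. S \<subseteq> X \<and> X \<subseteq> {1..n} \<and> X \<noteq> {1..n}} = real (n - card S) / real (card S + 1)"
proof -
  let ?U = "{1..n::nat}"
  have finS: "finite S" using assms finite_subset by blast
  have cS: "card S \<le> n" using card_mono[OF _ assms] by simp
  have bij: "bij_betw (\<lambda>Y. ?U - Y) {Y. Y \<subseteq> ?U - S \<and> Y \<noteq> {}} {X. S \<subseteq> X \<and> X \<subseteq> ?U \<and> X \<noteq> ?U}"
  proof (rule bij_betw_byWitness[where f' = "\<lambda>X. ?U - X"])
  qed (use assms in auto)
  have "lubell n {X. S \<subseteq> X \<and> X \<subseteq> ?U \<and> X \<noteq> ?U} = (\<Sum>Y\<in>{Y. Y \<subseteq> ?U - S \<and> Y \<noteq> {}}. 1 / real (n choose card (?U - Y)))"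
    unfolding lubell_def using sum.reindex_bij_betw[OF bij, of "\<lambda>X. 1 / real (n choose card X)"] by simp
  also have "\<dots> = lubell n {Y. Y \<subseteq> ?U - S \<and> Y \<noteq> {}}"
    unfolding lubell_def
  proof (rule sum.cong)
    fix Y assume "Y \<in> {Y. Y \<subseteq> ?U - S \<and> Y \<noteq> {}}"
    hence Y: "Y \<subseteq> ?U" by auto
    hence "card (?U - Y) = n - card Y" by (simp add: card_Diff_subset finite_subset)
    moreover have "card Y \<le> n" using card_mono[OF _ Y] by simp
    ultimately show "1 / real (n choose card (?U - Y)) = 1 / real (n choose card Y)"
      using binomial_symmetric by metis
  qed simp
  also have "\<dots> = real (card (?U - S)) / real (n + 1 - card (?U - S))"
    by (rule lubell_down) (use card_mono[of "{1..n}" "{1..n} - S"] in auto)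
  also have "card (?U - S) = n - card S" using assms by (simp add: card_Diff_subset finS)
  also have "n + 1 - (n - card S) = card S + 1" using cS by simp
  finally show ?thesis .
qed

lemma key_ineq:
  assumes "1 \<le> s" "s < n"
  shows "real s / real (n + 1 - s) + real (n - s) / real (s + 1) < (real n + 1) / 2"
proof -
  define a where "a = real s"
  define b where "b = real n - real s"
  have a1: "a \<ge> 1" using assms a_def by simp
  have b1: "b \<ge> 1" using assms b_def by simp
  have e1: "real (n + 1 - s) = b + 1" using assms b_def by simp
  have e2: "real (n - s) = b" using assms b_def by simp
  have e3: "real n = a + b" using a_def b_def by simp
  have "a / (b + 1) + b / (a + 1) < (a + b + 1) / 2"
  proof -
    have "2 * a * (a + 1) + 2 * b * (b + 1) < (a + b + 1) * (b + 1) * (a + 1)"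
    proof -
      have "(a + b + 1) * (b + 1) * (a + 1) - (2 * a * (a + 1) + 2 * b * (b + 1))
          = a*a*(b-1) + b*b*(a-1) + 3*a*b + 1" by (simp add: algebra_simps)
      moreover have "a*a*(b-1) \<ge> 0" using a1 b1 by simp
      moreover have "b*b*(a-1) \<ge> 0" using a1 b1 by simp
      moreover have "a*b > 0" using a1 b1 by simp
      ultimately show ?thesis by linarith
    qed
    hence "(a * (a + 1) + b * (b + 1)) / ((b + 1) * (a + 1)) < (a + b + 1) / 2"
      using a1 b1 by (simp add: divide_simps)
    moreover have "a / (b + 1) + b / (a + 1) = (a * (a + 1) + b * (b + 1)) / ((b + 1) * (a + 1))"
      using a1 b1 by (simp add: field_simps)
    ultimately show ?thesis by simp
  qed
  moreover have e4: "real (s + 1) = a + 1" using a_def by simp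
  ultimately show ?thesis unfolding e1 e2 e3 e4 a_def[symmetric] by simp
qed


lemma main_comb:
  fixes c :: "nat set \<Rightarrow> nat" and e n :: nat
  assumes n: "n = 2*e+1"
    and norb: "\<And>x y. x \<subseteq> {1..n} \<Longrightarrow> y \<subseteq> {1..n} \<Longrightarrow> \<not> x \<subseteq> y \<Longrightarrow> \<not> y \<subseteq> x \<Longrightarrow>
                 c x = c y \<or> c x = c {} \<or> c y = c {}"
  shows "\<exists>col. lubell n {X. X \<subseteq> {1..n} \<and> c X = col} > real e"
proof -
  define U where "U = {1..n}"
  define \<alpha> where "\<alpha> = c {}"
  define N where "N = {X. X \<subseteq> U \<and> X \<noteq> {} \<and> X \<noteq> U \<and> c X \<noteq> \<alpha>}"
  define LV where "LV = {X. X \<subseteq> U \<and> card X < n}"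
  define F where "F = (\<lambda>col. {X. X \<subseteq> U \<and> c X = col})"
  have finU: "finite U" unfolding U_def by simp
  have finF: "finite (F col)" for col
    by (rule finite_subset[of _ "Pow U"]) (use finU in \<open>auto simp: F_def\<close>)
  have finN: "finite N"
    by (rule finite_subset[of _ "Pow U"]) (use finU in \<open>auto simp: N_def\<close>)
  have LVn: "lubell n LV = real n" unfolding LV_def U_def by (rule lubell_levels)
  have KP: "x \<subseteq> y \<or> y \<subseteq> x" if "x \<in> N" "y \<in> N" "c x \<noteq> c y" for x y
    using norb[of x y] that unfolding N_def U_def \<alpha>_def by auto
  have SL: "c x = c y" if "x \<in> N" "y \<in> N" "card x = card y" for x y
  proof (rule ccontr)
    assume ne: "c x \<noteq> c y"
    have fx: "finite x" "finite y" using that finU unfolding N_def by (auto dest: finite_subset)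
    from KP[OF that(1,2) ne] have "x = y"
      using card_subset_eq fx that(3) by metis
    thus False using ne by simp
  qed
  show ?thesis
  proof (cases "\<forall>x\<in>N. \<forall>y\<in>N. c x = c y")
    case True
    define \<beta> where "\<beta> = (if N = {} then \<alpha> else c (SOME x. x \<in> N))"
    have "LV \<subseteq> F \<alpha> \<union> F \<beta>"
    proof
      fix X assume X: "X \<in> LV"
      show "X \<in> F \<alpha> \<union> F \<beta>"
      proof (cases "c X = \<alpha>")
        case True thus ?thesis using X by (auto simp: F_def LV_def)
      next
        case False
        have "X \<noteq> {}" using False \<alpha>_def by auto
        moreover have "X \<noteq> U" using X unfolding LV_def U_def n by auto
        ultimately have XN: "X \<in> N" using X False unfolding N_def LV_def by auto
        hence "N \<noteq> {}" by auto
        hence "(SOME x. x \<in> N) \<in> N" by (simp add: some_in_eq)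
        hence "c X = c (SOME x. x \<in> N)" using True XN by blast
        hence "c X = \<beta>" using \<open>N \<noteq> {}\<close> unfolding \<beta>_def by simp
        thus ?thesis using X by (auto simp: F_def LV_def)
      qed
    qed
    hence "lubell n LV \<le> lubell n (F \<alpha> \<union> F \<beta>)" using finF by (intro lubell_mono) auto
    also have "\<dots> \<le> lubell n (F \<alpha>) + lubell n (F \<beta>)" using finF by (intro lubell_union)
    finally have "real n \<le> lubell n (F \<alpha>) + lubell n (F \<beta>)" using LVn by simp
    hence "lubell n (F \<alpha>) > real e \<or> lubell n (F \<beta>) > real e" using n by auto
    thus ?thesis unfolding F_def U_def by auto
  next
    case False
    then obtain x1 y1 where x1: "x1 \<in> N" and y1: "y1 \<in> N" and ne1: "c x1 \<noteq> c y1" by auto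
    obtain x0 where x0: "x0 \<in> N" and x0min: "\<forall>y. y \<in> N \<longrightarrow> card x0 \<le> card y"
      using ex_has_least_nat[of "\<lambda>X. X \<in> N" x1 card] x1 by auto
    define \<chi> where "\<chi> = c x0"
    have "\<exists>z. z \<in> N \<and> c z \<noteq> \<chi>" using x1 y1 ne1 by (cases "c x1 = \<chi>") auto
    then obtain z1 where "z1 \<in> N \<and> c z1 \<noteq> \<chi>" by blast
    then obtain z0 where z0: "z0 \<in> N \<and> c z0 \<noteq> \<chi>" and z0min: "\<forall>y. y \<in> N \<and> c y \<noteq> \<chi> \<longrightarrow> card z0 \<le> card y"
      using ex_has_least_nat[of "\<lambda>X. X \<in> N \<and> c X \<noteq> \<chi>" z1 card] by auto
    have "card x0 \<le> card z0" using x0min z0 by auto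
    moreover have "card x0 \<noteq> card z0" using SL[of x0 z0] x0 z0 \<chi>_def by auto
    ultimately have lt: "card x0 < card z0" by simp
    define L where "L = {X \<in> N. card X < card z0}"
    define H where "H = {X \<in> N. card X \<ge> card z0}"
    have Lchi: "c x = \<chi>" if "x \<in> L" for x
    proof (rule ccontr)
      assume "c x \<noteq> \<chi>"
      hence "card z0 \<le> card x" using z0min that unfolding L_def by blast
      thus False using that unfolding L_def by simp
    qed
    have finN': "finite X" if "X \<in> N" for X using that finU unfolding N_def by (auto dest: finite_subset)
    have below: "x \<subseteq> z0" if "x \<in> L" for x
    proof -
      have "c x \<noteq> c z0" using Lchi[OF that] z0 by auto
      moreover have "x \<in> N" using that unfolding L_def by blast
      ultimately have "x \<subseteq> z0 \<or> z0 \<subseteq> x" using KP[of x z0] z0 by blast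
      moreover have "\<not> z0 \<subseteq> x"
      proof
        assume "z0 \<subseteq> x"
        hence "card z0 \<le> card x" using card_mono finN' \<open>x \<in> N\<close> by blast
        thus False using that unfolding L_def by simp
      qed
      ultimately show ?thesis by blast
    qed
    have cut: "x \<subseteq> y" if "x \<in> L" "y \<in> H" for x y
    proof (cases "c y = \<chi>")
      case False
      hence "c x \<noteq> c y" using Lchi[OF that(1)] by auto
      moreover have "x \<in> N" "y \<in> N" using that unfolding L_def H_def by blast+
      ultimately have "x \<subseteq> y \<or> y \<subseteq> x" using KP[of x y] by blast
      moreover have "\<not> y \<subseteq> x"
      proof
        assume "y \<subseteq> x"
        hence "card y \<le> card x" using card_mono finN' \<open>x \<in> N\<close> by blast
        thus False using that unfolding L_def H_def by simp
      qed
      ultimately show ?thesis by blast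
    next
      case True
      have yN: "y \<in> N" using that unfolding H_def by blast
      have "card y \<noteq> card z0" using SL[of y z0] True z0 yN by auto
      hence "card y > card z0" using that unfolding H_def by auto
      have "c y \<noteq> c z0" using True z0 by auto
      hence "y \<subseteq> z0 \<or> z0 \<subseteq> y" using KP[of y z0] yN z0 by blast
      moreover have "\<not> y \<subseteq> z0"
      proof
        assume "y \<subseteq> z0"
        hence "card y \<le> card z0" using card_mono finN' z0 by blast
        thus False using \<open>card y > card z0\<close> by simp
      qed
      ultimately have "z0 \<subseteq> y" by blast
      thus ?thesis using below[OF that(1)] by blast
    qed
    define S where "S = \<Union>L"
    have SZ: "S \<subseteq> z0" using below unfolding S_def by auto
    have z0U: "z0 \<subseteq> U" "z0 \<noteq> U" using z0 unfolding N_def by auto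
    have SU: "S \<subseteq> U" using SZ z0U by auto
    have finS: "finite S" using SU finU finite_subset by blast
    have x0L: "x0 \<in> L" using x0 lt unfolding L_def by auto
    have "x0 \<subseteq> S" using x0L unfolding S_def by auto
    moreover have "x0 \<noteq> {}" using x0 unfolding N_def by auto
    ultimately have "S \<noteq> {}" by auto
    hence s1: "1 \<le> card S" using finS by (simp add: Suc_le_eq card_gt_0_iff)
    have "card z0 < card U" using z0U finU psubset_card_mono by blast
    hence s2: "card S < n" using card_mono[OF _ SZ] finN'[of z0] z0 unfolding U_def by force
    have Nsub: "N \<subseteq> {X. X \<subseteq> S \<and> X \<noteq> {}} \<union> {X. S \<subseteq> X \<and> X \<subseteq> U \<and> X \<noteq> U}"
    proof
      fix X assume XN: "X \<in> N"
      show "X \<in> {X. X \<subseteq> S \<and> X \<noteq> {}} \<union> {X. S \<subseteq> X \<and> X \<subseteq> U \<and> X \<noteq> U}"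
      proof (cases "card X < card z0")
        case True
        hence "X \<in> L" using XN unfolding L_def by auto
        thus ?thesis using XN unfolding S_def N_def by auto
      next
        case False
        hence "X \<in> H" using XN unfolding H_def by auto
        hence "S \<subseteq> X" using cut unfolding S_def by auto
        thus ?thesis using XN unfolding N_def by auto
      qed
    qed
    have "lubell n N \<le> lubell n ({X. X \<subseteq> S \<and> X \<noteq> {}} \<union> {X. S \<subseteq> X \<and> X \<subseteq> U \<and> X \<noteq> U})"
      by (rule lubell_mono[OF Nsub]) (use finS finU in auto)
    also have "\<dots> \<le> lubell n {X. X \<subseteq> S \<and> X \<noteq> {}} + lubell n {X. S \<subseteq> X \<and> X \<subseteq> U \<and> X \<noteq> U}"
      by (rule lubell_union) (use finS finU in auto)
    also have "\<dots> = real (card S) / real (n + 1 - card S) + real (n - card S) / real (card S + 1)"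
      using lubell_down[OF finS] lubell_up[of S n] s2 SU unfolding U_def by simp
    also have "\<dots> < (real n + 1) / 2" using key_ineq s1 s2 by blast
    finally have Nb: "lubell n N < (real n + 1) / 2" .
    have "LV \<subseteq> F \<alpha> \<union> N"
    proof
      fix X assume X: "X \<in> LV"
      show "X \<in> F \<alpha> \<union> N"
      proof (cases "c X = \<alpha>")
        case True thus ?thesis using X by (auto simp: F_def LV_def)
      next
        case False
        have "X \<noteq> {}" using False \<alpha>_def by auto
        moreover have "X \<noteq> U" using X unfolding LV_def U_def n by auto
        ultimately show ?thesis using X False unfolding N_def LV_def by auto
      qed
    qed
    hence "lubell n LV \<le> lubell n (F \<alpha> \<union> N)" using finF finN by (intro lubell_mono) auto
    also have "\<dots> \<le> lubell n (F \<alpha>) + lubell n N" using finF finN by (intro lubell_union)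
    finally have "real n \<le> lubell n (F \<alpha>) + lubell n N" using LVn by simp
    hence "lubell n (F \<alpha>) > real e" using Nb n by simp
    thus ?thesis unfolding F_def U_def by auto
  qed
qed


lemma emb_exists: "\<exists>f. induced_emb (UNIV::'a::{finite,order} set) (\<le>) (Pow {1..card (UNIV::'a set)}) f"
proof -
  obtain h where h: "bij_betw h {1..card (UNIV::'a set)} (UNIV::'a set)"
    using ex_bij_betw_nat_finite_1[of "UNIV::'a set"] by auto
  define g where "g = inv_into {1..card (UNIV::'a set)} h"
  have g: "bij_betw g UNIV {1..card (UNIV::'a set)}" using bij_betw_inv_into[OF h] g_def by simp
  have ginj: "inj g" using g bij_betw_def by blast
  define f where "f x = g ` {y. y \<le> x}" for x :: 'a
  have mem: "g x \<in> f y \<longleftrightarrow> x \<le> y" for x y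
    unfolding f_def using ginj by (auto dest: injD)
  have sub: "f x \<subseteq> f y \<longleftrightarrow> x \<le> y" for x y
  proof
    assume "f x \<subseteq> f y"
    moreover have "g x \<in> f x" using mem by simp
    ultimately show "x \<le> y" using mem by blast
  next
    assume "x \<le> y" thus "f x \<subseteq> f y" unfolding f_def by auto
  qed
  have "inj f"
  proof (rule injI)
    fix x y assume "f x = f y"
    thus "x = y" using sub by (metis antisym order_refl)
  qed
  moreover have "f ` UNIV \<subseteq> Pow {1..card (UNIV::'a set)}"
    unfolding f_def using g bij_betw_imp_surj_on by fastforce
  ultimately show ?thesis unfolding induced_emb_def using sub by blast
qed

lemma e_free:
  "induced_free (UNIV::'a::{finite,order} set) (\<le>) (consec_levels n k (e_num (UNIV::'a set) (\<le>)))"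
proof -
  let ?Q = "\<lambda>m. \<forall>n k. induced_free (UNIV::'a set) (\<le>) (consec_levels n k m)"
  have Q0: "?Q 0"
  proof (intro allI)
    fix n k
    have "consec_levels n k 0 = {}" unfolding consec_levels_def by auto
    thus "induced_free (UNIV::'a set) (\<le>) (consec_levels n k 0)"
      unfolding induced_free_def induced_emb_def by auto
  qed
  have bd: "m \<le> card (UNIV::'a set)" if "?Q m" for m
  proof (rule ccontr)
    assume "\<not> m \<le> card (UNIV::'a set)"
    obtain f where f: "induced_emb (UNIV::'a set) (\<le>) (Pow {1..card (UNIV::'a set)}) f" using emb_exists by blast
    have "f ` UNIV \<subseteq> consec_levels (card (UNIV::'a set)) 0 m"
    proof
      fix X assume "X \<in> f ` UNIV"
      hence X: "X \<subseteq> {1..card (UNIV::'a set)}" using f unfolding induced_emb_def by auto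
      hence "card X \<le> card (UNIV::'a set)" using card_mono[OF _ X] by simp
      thus "X \<in> consec_levels (card (UNIV::'a set)) 0 m" using X \<open>\<not> m \<le> card (UNIV::'a set)\<close> unfolding consec_levels_def by simp
    qed
    hence "induced_emb (UNIV::'a set) (\<le>) (consec_levels (card (UNIV::'a set)) 0 m) f"
      using f unfolding induced_emb_def by auto
    thus False using that unfolding induced_free_def by blast
  qed
  have "?Q (Greatest ?Q)" by (rule GreatestI_nat[where P = ?Q, OF Q0]) (use bd in blast)
  thus ?thesis unfolding e_num_def by blast
qed

lemma lubell_le_max:
  assumes "F \<subseteq> boolean_lattice n" "induced_free A le F"
  shows "lubell n F \<le> Lubell_max n A le"
  unfolding Lubell_max_def
proof (rule Max_ge)
  have "{lubell n F |F. F \<subseteq> boolean_lattice n \<and> induced_free A le F} \<subseteq> lubell n ` Pow (boolean_lattice n)"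
    by auto
  moreover have "finite (Pow (boolean_lattice n))" unfolding boolean_lattice_def by simp
  ultimately show "finite {lubell n F |F. F \<subseteq> boolean_lattice n \<and> induced_free A le F}"
    using finite_subset by blast
qed (use assms in blast)


theorem theorem1p7:
  assumes "uniformly_induced_Lubell_bounded (UNIV :: 'a :: {finite, order} set) (\<le>)"
    and "card (UNIV :: 'a set) \<noteq> 1"
  shows "RR V2_carrier V2_le (UNIV :: 'a set) (\<le>) = 2 * e_num (UNIV :: 'a set) (\<le>) + 1"
proof -
  define e where "e = e_num (UNIV :: 'a set) (\<le>)"
  have free: "induced_free (UNIV::'a set) (\<le>) (consec_levels n k e)" for n k
    unfolding e_def by (rule e_free)
  have "\<exists>a b :: 'a. a \<noteq> b"
  proof (rule ccontr)
    assume "\<not> (\<exists>a b :: 'a. a \<noteq> b)"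
    hence "\<forall>x::'a. x = undefined" by blast
    hence "(UNIV::'a set) = {undefined}" by blast
    hence "card (UNIV::'a set) = card {undefined::'a}" by (simp only:)
    hence "card (UNIV::'a set) = 1" by simp
    thus False using assms(2) by simp
  qed
  then obtain a b :: 'a where ab: "a \<noteq> b" by blast
  let ?R = "\<lambda>n. \<forall>c :: nat set \<Rightarrow> nat.
      (\<exists>f. induced_emb V2_carrier V2_le (boolean_lattice n) f \<and> inj_on c (f ` V2_carrier)) \<or>
      (\<exists>f col. induced_emb (UNIV::'a set) (\<le>) (boolean_lattice n) f \<and> (\<forall>x\<in>UNIV. c (f x) = col))"
  have up: "?R (2*e+1)"
  proof
    fix c :: "nat set \<Rightarrow> nat"
    define n where "n = 2*e+1"
    show "(\<exists>f. induced_emb V2_carrier V2_le (boolean_lattice (2*e+1)) f \<and> inj_on c (f ` V2_carrier)) \<or>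
      (\<exists>f col. induced_emb (UNIV::'a set) (\<le>) (boolean_lattice (2*e+1)) f \<and> (\<forall>x\<in>UNIV. c (f x) = col))"
    proof (cases "\<exists>f. induced_emb V2_carrier V2_le (boolean_lattice n) f \<and> inj_on c (f ` V2_carrier)")
      case True thus ?thesis unfolding n_def by blast
    next
      case False
      have norb: "c x = c y \<or> c x = c {} \<or> c y = c {}"
        if xy: "x \<subseteq> {1..n}" "y \<subseteq> {1..n}" "\<not> x \<subseteq> y" "\<not> y \<subseteq> x" for x y
      proof (rule ccontr)
        assume H: "\<not> (c x = c y \<or> c x = c {} \<or> c y = c {})"
        define f where "f = (\<lambda>i::nat. if i = 0 then {} else if i = 1 then x else y)"
        have ne: "x \<noteq> {}" "y \<noteq> {}" "x \<noteq> y" using xy by auto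
        have "induced_emb V2_carrier V2_le (boolean_lattice n) f"
          unfolding induced_emb_def V2_carrier_def V2_le_def boolean_lattice_def f_def
          using xy ne by (auto simp: inj_on_def)
        moreover have "inj_on c (f ` V2_carrier)"
          unfolding V2_carrier_def f_def using H by (auto simp: inj_on_def)
        ultimately show False using False by blast
      qed
      obtain col where col: "lubell n {X. X \<subseteq> {1..n} \<and> c X = col} > real e"
        using main_comb[of n e c] norb n_def by blast
      let ?F = "{X. X \<subseteq> {1..n} \<and> c X = col}"
      have Fsub: "?F \<subseteq> boolean_lattice n" unfolding boolean_lattice_def by auto
      have "\<not> induced_free (UNIV::'a set) (\<le>) ?F"
      proof
        assume "induced_free (UNIV::'a set) (\<le>) ?F"
        hence "lubell n ?F \<le> Lubell_max n (UNIV::'a set) (\<le>)" using lubell_le_max Fsub by blast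
        also have "\<dots> \<le> real e" using assms(1) unfolding uniformly_induced_Lubell_bounded_def e_def n_def by simp
        finally show False using col by simp
      qed
      then obtain f where f: "induced_emb (UNIV::'a set) (\<le>) ?F f" unfolding induced_free_def by blast
      hence "induced_emb (UNIV::'a set) (\<le>) (boolean_lattice n) f"
        using Fsub unfolding induced_emb_def by blast
      moreover have "\<forall>x\<in>UNIV. c (f x) = col" using f unfolding induced_emb_def by auto
      ultimately show ?thesis unfolding n_def by blast
    qed
  qed
  have low: "\<not> ?R m" if m: "m \<le> 2*e" for m
  proof
    assume R: "?R m"
    define c0 where "c0 = (\<lambda>X::nat set. if card X < e then 0 else if card X < 2*e then 1 else (2::nat))"
    have small: "card X < 2*e" if "X \<subseteq> {1..m}" "X \<noteq> {1..m}" for X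
    proof -
      have "X \<subset> {1..m}" using that by auto
      hence "card X < card {1..m}" by (intro psubset_card_mono) simp_all
      thus ?thesis using m by simp
    qed
    from R[rule_format, of c0] show False
    proof
      assume "\<exists>f. induced_emb V2_carrier V2_le (boolean_lattice m) f \<and> inj_on c0 (f ` V2_carrier)"
      then obtain f where f: "induced_emb V2_carrier V2_le (boolean_lattice m) f" and inj: "inj_on c0 (f ` V2_carrier)"
        by blast
      have fs: "f 0 \<subseteq> {1..m}" "f 1 \<subseteq> {1..m}" "f 2 \<subseteq> {1..m}"
        using f unfolding induced_emb_def V2_carrier_def boolean_lattice_def by auto
      have emb: "(f x \<subseteq> f y) = V2_le x y" if "x \<in> V2_carrier" "y \<in> V2_carrier" for x y
        using f that unfolding induced_emb_def by blast
      have rel: "f 0 \<subseteq> f 1" "\<not> f 1 \<subseteq> f 0" "\<not> f 1 \<subseteq> f 2" "\<not> f 2 \<subseteq> f 1"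
        using emb[of 0 1] emb[of 1 0] emb[of 1 2] emb[of 2 1] unfolding V2_carrier_def V2_le_def by simp_all
      have "f 1 \<noteq> {1..m}" using fs rel by auto
      hence c1: "card (f 1) < 2*e" using small fs by blast
      have "f 2 \<noteq> {1..m}" using fs rel by auto
      hence c2: "card (f 2) < 2*e" using small fs by blast
      have "f 0 \<subset> f 1" using rel by auto
      hence "card (f 0) < card (f 1)" using fs(2) by (meson finite_atLeastAtMost finite_subset psubset_card_mono)
      hence c0': "card (f 0) < 2*e" using c1 by simp
      have d: "f 0 \<noteq> f 1" "f 0 \<noteq> f 2" "f 1 \<noteq> f 2" using rel by auto
      have inj3: "inj_on c0 {f 0, f 1, f 2}" using inj unfolding V2_carrier_def by simp
      have v: "c0 (f i) \<in> {0, 1}" if "i \<in> {0,1,2::nat}" for i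
        using that c1 c2 c0' unfolding c0_def by auto
      have "c0 (f 0) \<noteq> c0 (f 1)" "c0 (f 0) \<noteq> c0 (f 2)" "c0 (f 1) \<noteq> c0 (f 2)"
        using inj3 d by (auto simp: inj_on_def)
      thus False using v[of 0] v[of 1] v[of 2] by auto
    next
      assume "\<exists>f col. induced_emb (UNIV::'a set) (\<le>) (boolean_lattice m) f \<and> (\<forall>x\<in>UNIV. c0 (f x) = col)"
      then obtain f col where f: "induced_emb (UNIV::'a set) (\<le>) (boolean_lattice m) f"
        and col: "\<forall>x. c0 (f x) = col" by blast
      have fs: "f x \<subseteq> {1..m}" for x using f unfolding induced_emb_def boolean_lattice_def by auto
      have injf: "inj f" using f unfolding induced_emb_def by simp
      consider "col = 0" | "col = 1" | "col = 2" | "col > 2" by linarith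
      thus False
      proof cases
        case 1
        have cx: "card (f x) < 0 + e" for x
          using col[rule_format, of x] 1 unfolding c0_def by (auto split: if_splits)
        have "induced_emb (UNIV::'a set) (\<le>) (consec_levels m 0 e) f"
          using f fs cx unfolding induced_emb_def consec_levels_def by auto
        thus False using free[of m] unfolding induced_free_def by blast
      next
        case 2
        have cx: "e \<le> card (f x) \<and> card (f x) < e + e" for x
        proof -
          have "c0 (f x) = 1" using col 2 by simp
          thus ?thesis unfolding c0_def
            by (cases "card (f x) < e"; cases "card (f x) < 2*e") simp_all
        qed
        have "induced_emb (UNIV::'a set) (\<le>) (consec_levels m e e) f"
          using f fs cx unfolding induced_emb_def consec_levels_def by auto
        thus False using free[of m] unfolding induced_free_def by blast
      next
        case 3
        have full: "f x = {1..m}" for x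
        proof (rule ccontr)
          assume "f x \<noteq> {1..m}"
          hence "card (f x) < 2*e" using small fs by blast
          hence "c0 (f x) \<noteq> 2" unfolding c0_def by auto
          thus False using col 3 by simp
        qed
        have "f a = f b" using full by simp
        thus False using injf ab by (auto dest: injD)
      next
        case 4
        have "c0 (f a) \<le> 2" unfolding c0_def by auto
        thus False using col 4 by (metis not_le)
      qed
    qed
  qed
  have "RR V2_carrier V2_le (UNIV :: 'a set) (\<le>) = 2 * e + 1"
    unfolding RR_def
  proof (rule Least_equality)
    show "?R (2*e+1)" by (rule up)
  next
    fix m assume "?R m"
    show "2*e+1 \<le> m"
    proof (rule ccontr)
      assume "\<not> 2*e+1 \<le> m"
      hence "m \<le> 2*e" by simp
      from low[OF this] \<open>?R m\<close> show False by (rule notE)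
    qed
  qed
  thus ?thesis unfolding e_def .
qed

end
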